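(* For $\mathbf v\in\mathbb{R}^\infty$, let $g_{-\mathbf v}(x)$ be the generating function of $\mathbb{F}^{\rm F}\mathbf v$ and $g_{\mathbf v}(x)$ the generating function of $\mathbb{L}^{\rm F}\mathbf v$, where $\mathbb{F}^{\rm F}=\left(\frac{x}{1-x},\frac{x^2}{1-x}\right)$ and $\mathbb{L}^{\rm F}=\left(\frac{2-x}{1-x},\frac{x^2}{1-x}\right)$. Let $C(x)=\frac{1-\sqrt{1-4x}}{2x}$ and $M(x)=\frac{1-x-\sqrt{(1-x)^2-4x^2}}{2x^2}$. Then, as formal power series: (a) $g_{\mathbf v}(xC(x))=\left(C(x)-\frac{2}{x}\right)g_{-\mathbf v}(1-C(x))$; (b) $g_{\mathbf v}(1-C(x))=\left(2xC(x)^2+xC(x)-4C(x)+\frac{2-x}{x}\right)g_{-\mathbf v}(xC(x))$; (c) $g_{\mathbf v}(xC(x))=\left(\frac{x-2}{x}+\frac{x}{1-x}M\!\left(\frac{x}{1-x}\right)\right)g_{-\mathbf v}\!\left(-\frac{x}{1-x}M\!\left(\frac{x}{1-x}\right)\right)$; (d) $g_{\mathbf v}\!\left(-\frac{x}{1-x}M\!\left(\frac{x}{1-x}\right)\right)=\left((3x-4)C(x)+\frac{2x^2C(x)}{1-x}M\!\left(\frac{x}{1-x}\right)+\frac{2-x}{x}\right)g_{-\mathbf v}(xC(x))$.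
   Context: $\mathbb{R}^\infty$ is the space of real column vectors $[v_0,v_1,\ldots]^T$, identified with generating functions $\sum_n v_nx^n$. For formal power series $g(x)$ and $f(x)$ with $f(0)=0$, $(g(x),f(x))$ denotes the infinite lower triangular matrix whose $j$-th column has generating function $g(x)f(x)^j$; it maps a vector with generating function $U(x)$ to the vector with generating function $g(x)U(f(x))$. Note $g_{-\mathbf v}$ has zero constant term, so the products with the factor $1/x$ above are formal power series. *)

theory Defs
  imports "HOL-Computational_Algebra.Computational_Algebra"
begin

definition gf :: "(nat \<Rightarrow> real) \<Rightarrow> real fps" where
  "gf v = Abs_fps v"

definition riordan :: "real fps \<Rightarrow> real fps \<Rightarrow> nat \<Rightarrow> nat \<Rightarrow> real" where
  "riordan g f i j = (g * f ^ j) $ i"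

text \<open>Product of an infinite lower triangular matrix with a column vector
  (entries above the diagonal are zero, so the sum is finite).\<close>

definition lt_mat_vec :: "(nat \<Rightarrow> nat \<Rightarrow> real) \<Rightarrow> (nat \<Rightarrow> real) \<Rightarrow> nat \<Rightarrow> real" where
  "lt_mat_vec A v i = (\<Sum>j\<le>i. A i j * v j)"

definition FF :: "nat \<Rightarrow> nat \<Rightarrow> real" where
  "FF = riordan (fps_X / (1 - fps_X)) (fps_X ^ 2 / (1 - fps_X))"

definition LF :: "nat \<Rightarrow> nat \<Rightarrow> real" where
  "LF = riordan ((2 - fps_X) / (1 - fps_X)) (fps_X ^ 2 / (1 - fps_X))"

definition g_minus :: "(nat \<Rightarrow> real) \<Rightarrow> real fps" where
  "g_minus v = gf (lt_mat_vec FF v)"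

definition g_plus :: "(nat \<Rightarrow> real) \<Rightarrow> real fps" where
  "g_plus v = gf (lt_mat_vec LF v)"

text \<open>Square root of a power series (with constant term 1: principal branch).\<close>

definition fps_sqrt :: "real fps \<Rightarrow> real fps" where
  "fps_sqrt a = fps_radical (\<lambda>n x. root n x) 2 a"

definition catalanC :: "real fps" where
  "catalanC = (1 - fps_sqrt (1 - 4 * fps_X)) / (2 * fps_X)"

definition motzkinM :: "real fps" where
  "motzkinM = (1 - fps_X - fps_sqrt ((1 - fps_X) ^ 2 - 4 * fps_X ^ 2)) / (2 * fps_X ^ 2)"

end

theory Submission imports Defs begin

lemma div_X2:
  fixes f :: "real fps"
  assumes "f $ 0 = 0" "f $ 1 = 0" "c \<noteq> 0"
  shows "f / (fps_const c * fps_X ^ 2) * (fps_const c * fps_X ^ 2) = f"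
proof -
  have fX: "f = fps_shift 2 f * fps_X ^ 2"
  proof (cases "f = 0")
    case False
    have "2 \<le> subdegree f"
      by (rule subdegree_geI) (use False assms in \<open>auto simp: less_2_cases_iff\<close>)
    then show ?thesis by (simp add: fps_shift_times_fps_X_power)
  qed simp
  have "(fps_const c * fps_X ^ 2) dvd f"
  proof (rule dvdI)
    show "f = fps_const c * fps_X ^ 2 * (fps_const (1/c) * fps_shift 2 f)"
      using assms(3) fX by (simp add: algebra_simps flip: fps_const_mult)
  qed
  thus ?thesis by simp
qed

lemma div_X1:
  fixes f :: "real fps"
  assumes "f $ 0 = 0" "c \<noteq> 0"
  shows "f / (fps_const c * fps_X) * (fps_const c * fps_X) = f"
proof -
  have fX: "f = fps_shift 1 f * fps_X"
  proof (cases "f = 0")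
    case False
    have "1 \<le> subdegree f"
      by (rule subdegree_geI) (use False assms in \<open>auto\<close>)
    then show ?thesis by (rule fps_shift_times_fps_X[symmetric])
  qed simp
  have "(fps_const c * fps_X) dvd f"
  proof (rule dvdI)
    show "f = fps_const c * fps_X * (fps_const (1/c) * fps_shift 1 f)"
    proof -
      have cc: "fps_const c * fps_const (1/c) = (1::real fps)"
        using assms(2) by (simp flip: fps_const_mult)
      show ?thesis by (metis cc fX mult.assoc mult.commute mult_1)
    qed
  qed
  thus ?thesis by simp
qed

lemma sqrt_sq:
  assumes "a $ 0 = 1"
  shows "fps_sqrt a ^ 2 = a" "fps_sqrt a $ 0 = 1"
proof -
  have "(root (Suc 1) (a$0)) ^ Suc 1 = a$0" using assms by simp
  from power_radical[of a "\<lambda>n x. root n x" 1, OF _ ] this assms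
  show "fps_sqrt a ^ 2 = a" by (simp add: fps_sqrt_def numeral_2_eq_2)
  show "fps_sqrt a $ 0 = 1" using assms by (simp add: fps_sqrt_def)
qed

lemma C_eq: "fps_X * catalanC ^ 2 - catalanC + 1 = 0"
proof -
  define S where "S = fps_sqrt (1 - 4 * fps_X)"
  have S2: "S ^ 2 = 1 - 4 * fps_X" and S0: "S $ 0 = 1"
    using sqrt_sq[of "1 - 4 * fps_X"] by (simp_all add: S_def)
  have "(1 - S) / (fps_const 2 * fps_X) * (fps_const 2 * fps_X) = 1 - S"
    by (rule div_X1) (simp_all add: S0)
  hence h: "catalanC * (2 * fps_X) = 1 - S"
    by (simp add: catalanC_def S_def numeral_fps_const)
  have "(1 - catalanC * (2 * fps_X))^2 = 1 - 4 * fps_X" using h S2 by simp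
  hence "4 * fps_X * (fps_X * catalanC ^ 2 - catalanC + 1) = 0"
    by (simp add: algebra_simps power2_eq_square)
  thus ?thesis by simp
qed

lemma C0: "catalanC $ 0 = 1"
proof -
  have "(fps_X * catalanC ^ 2 - catalanC + 1) $ 0 = 0" using C_eq by simp
  thus ?thesis by simp
qed

lemma M_eq: "motzkinM - 1 - fps_X * motzkinM - fps_X^2 * motzkinM^2 = 0"
proof -
  define T where "T = fps_sqrt ((1 - fps_X) ^ 2 - 4 * fps_X ^ 2)"
  have T2: "T ^ 2 = (1 - fps_X) ^ 2 - 4 * fps_X ^ 2" and T0: "T $ 0 = 1"
    using sqrt_sq[of "(1 - fps_X) ^ 2 - 4 * fps_X ^ 2"] by (simp_all add: T_def power2_eq_square)
  have "(T^2) $ 1 = (((1::real fps) - fps_X) ^ 2 - 4 * fps_X ^ 2) $ 1" using T2 by simp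
  hence "2 * T $ 1 = -2" using T0 by (simp add: power2_eq_square fps_mult_nth algebra_simps)
  hence T1: "T $ 1 = -1" by simp
  have "(1 - fps_X - T) / (fps_const 2 * fps_X ^ 2) * (fps_const 2 * fps_X ^ 2) = 1 - fps_X - T"
    by (rule div_X2) (simp_all add: T0 T1[unfolded One_nat_def])
  hence h: "motzkinM * (2 * fps_X ^ 2) = 1 - fps_X - T"
    by (simp add: motzkinM_def T_def numeral_fps_const)
  have "(1 - fps_X - motzkinM * (2 * fps_X ^ 2))^2 = (1 - fps_X) ^ 2 - 4 * fps_X ^ 2" using h T2 by simp
  hence "4 * fps_X ^ 2 * (motzkinM - 1 - fps_X * motzkinM - fps_X^2 * motzkinM^2) = 0"
    by (simp add: algebra_simps power2_eq_square)
  thus ?thesis by simp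
qed

lemma riordan_gf:
  assumes f0: "f $ 0 = 0"
  shows "gf (lt_mat_vec (riordan g f) v) = g * (gf v oo f)"
proof (rule fps_ext)
  fix i
  have z: "(f ^ j) $ m = 0" if "m < j" for j m
    using startsby_zero_power_prefix[OF f0] that by blast
  have "gf (lt_mat_vec (riordan g f) v) $ i = (\<Sum>j\<le>i. (\<Sum>k=0..i. g$k * (f^j) $ (i-k)) * v j)"
    by (simp add: gf_def lt_mat_vec_def riordan_def fps_mult_nth)
  also have "\<dots> = (\<Sum>k=0..i. \<Sum>j\<le>i. g$k * (v j * (f^j) $ (i-k)))"
    by (subst sum.swap) (simp add: sum_distrib_left sum_distrib_right algebra_simps)
  also have "\<dots> = (\<Sum>k=0..i. g$k * (\<Sum>j=0..i-k. v j * (f^j) $ (i-k)))"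
  proof (rule sum.cong[OF refl])
    fix k assume k: "k \<in> {0..i}"
    have "(\<Sum>j\<le>i. v j * (f^j) $ (i-k)) = (\<Sum>j=0..i-k. v j * (f^j) $ (i-k))"
      by (rule sum.mono_neutral_right) (auto simp: z)
    thus "(\<Sum>j\<le>i. g$k * (v j * (f^j) $ (i-k))) = g$k * (\<Sum>j=0..i-k. v j * (f^j) $ (i-k))"
      by (simp add: sum_distrib_left[symmetric])
  qed
  also have "\<dots> = (g * (gf v oo f)) $ i"
    by (simp add: fps_mult_nth fps_compose_nth gf_def)
  finally show "gf (lt_mat_vec (riordan g f) v) $ i = (g * (gf v oo f)) $ i" .
qed

lemma comp_rat:
  fixes a h :: "real fps"
  assumes "h $ 0 = 0"
  shows "(a * inverse (1 - fps_X)) oo h = (a oo h) * inverse (1 - h)"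
  using assms by (simp add: fps_compose_mult_distrib fps_inverse_compose fps_compose_sub_distrib)

lemma X2_comp:
  fixes h :: "real fps"
  assumes "h $ 0 = 0"
  shows "fps_X ^ 2 oo h = h ^ 2"
  using assms by (simp flip: fps_compose_power)

lemma two_comp:
  fixes h :: "real fps"
  assumes "h $ 0 = 0"
  shows "(2 - fps_X) oo h = 2 - h"
  using assms by (simp add: fps_compose_sub_distrib numeral_fps_const)

lemma dv1: "(a::real fps) / (1 - fps_X) = a * inverse (1 - fps_X)"
  by (rule fps_divide_unit) simp

lemma gm_comp:
  fixes h :: "real fps"
  assumes h0: "h $ 0 = 0"
  shows "g_minus v oo h = h * inverse (1 - h) * (gf v oo (h ^ 2 * inverse (1 - h)))"
proof -
  have f0: "(fps_X ^ 2 * inverse (1 - fps_X) :: real fps) $ 0 = 0" by simp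
  have "g_minus v = fps_X * inverse (1 - fps_X) * (gf v oo (fps_X ^ 2 * inverse (1 - fps_X)))"
    unfolding g_minus_def FF_def dv1
    by (rule riordan_gf[OF f0])
  hence "g_minus v oo h = (fps_X * inverse (1 - fps_X) oo h) * ((gf v oo (fps_X ^ 2 * inverse (1 - fps_X))) oo h)"
    using h0 by (simp add: fps_compose_mult_distrib)
  also have "\<dots> = h * inverse (1 - h) * (gf v oo ((fps_X ^ 2 * inverse (1 - fps_X)) oo h))"
    using h0 f0 by (simp add: comp_rat fps_compose_assoc[symmetric])
  also have "\<dots> = h * inverse (1 - h) * (gf v oo (h ^ 2 * inverse (1 - h)))"
    using h0 by (simp add: comp_rat X2_comp)
  finally show ?thesis .
qed

lemma gp_comp:
  fixes h :: "real fps"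
  assumes h0: "h $ 0 = 0"
  shows "g_plus v oo h = (2 - h) * inverse (1 - h) * (gf v oo (h ^ 2 * inverse (1 - h)))"
proof -
  have f0: "(fps_X ^ 2 * inverse (1 - fps_X) :: real fps) $ 0 = 0" by simp
  have "g_plus v = (2 - fps_X) * inverse (1 - fps_X) * (gf v oo (fps_X ^ 2 * inverse (1 - fps_X)))"
    unfolding g_plus_def LF_def dv1
    by (rule riordan_gf[OF f0])
  hence "g_plus v oo h = ((2 - fps_X) * inverse (1 - fps_X) oo h) * ((gf v oo (fps_X ^ 2 * inverse (1 - fps_X))) oo h)"
    using h0 by (simp add: fps_compose_mult_distrib)
  also have "\<dots> = (2 - h) * inverse (1 - h) * (gf v oo ((fps_X ^ 2 * inverse (1 - fps_X)) oo h))"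
    using h0 f0 by (simp add: comp_rat fps_compose_assoc[symmetric] two_comp)
  also have "\<dots> = (2 - h) * inverse (1 - h) * (gf v oo (h ^ 2 * inverse (1 - h)))"
    using h0 by (simp add: comp_rat X2_comp)
  finally show ?thesis .
qed

lemma fls_alg:
  fixes x c p n u w :: "real fls"
  assumes w: "x * w = 1" and cq: "x * c ^ 2 - c + 1 = 0" and n: "x * u * n = c - 1"
    and u: "(1 - x) * u = 1"
  shows "(2 - x * c) * c * p = (c - 2 * w) * ((1 - c) * (1 - x * c) * p)"
    "(2 - (1 - c)) * (1 - x * c) * p = (2 * x * c ^ 2 + x * c - 4 * c + (2 - x) * w) * (x * c * c * p)"
    "(2 - x * c) * c * p = ((x - 2) * w + x * u * n) * ((1 - c) * (1 - x * c) * p)"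
    "(2 - (1 - c)) * (1 - x * c) * p = ((3 * x - 4) * c + 2 * x ^ 2 * c * u * n + (2 - x) * w) * (x * c * c * p)"
  using assms by algebra+

lemma E_eq: "fps_X / (1 - fps_X) * (motzkinM oo (fps_X / (1 - fps_X))) = catalanC - 1"
proof -
  define y :: "real fps" where "y = fps_X * inverse (1 - fps_X)"
  define N where "N = motzkinM oo y"
  have y0: "y $ 0 = 0" by (simp add: y_def)
  have "(motzkinM - 1 - fps_X * motzkinM - fps_X^2 * motzkinM^2) oo y = 0"
    using M_eq by simp
  hence Neq: "N - 1 - y * N - y^2 * N^2 = 0"
    using y0 by (simp add: N_def fps_compose_sub_distrib fps_compose_mult_distrib X2_comp
        fps_compose_power[symmetric])
  have yinv: "y * (1 - fps_X) = fps_X"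
    unfolding y_def using inverse_mult_eq_1[of "1 - fps_X :: real fps"] by (simp add: mult.assoc)
  define F where "F = catalanC - 1"
  have cq: "fps_X * catalanC ^ 2 - catalanC + 1 = 0" by (rule C_eq)
  have "(y * N - F) * (1 - 2 * fps_X - fps_X * (y * N + F)) = 0"
    using Neq yinv cq unfolding F_def by algebra
  moreover have "(1 - 2 * fps_X - fps_X * (y * N + F)) \<noteq> 0"
  proof
    assume "(1 - 2 * fps_X - fps_X * (y * N + F)) = 0"
    hence "(1 - 2 * fps_X - fps_X * (y * N + F)) $ 0 = 0" by simp
    thus False by simp
  qed
  ultimately have "y * N = F" by simp
  thus ?thesis by (simp add: y_def N_def F_def dv1)
qed

theorem corollary4p4:
  fixes v :: "nat \<Rightarrow> real"
  shows
  "(fps_to_fls (g_plus v oo (fps_X * catalanC)) =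
     (fps_to_fls catalanC - 2 / fls_X) * fps_to_fls (g_minus v oo (1 - catalanC)))
   \<and> (fps_to_fls (g_plus v oo (1 - catalanC)) =
     (2 * fls_X * fps_to_fls catalanC ^ 2 + fls_X * fps_to_fls catalanC
        - 4 * fps_to_fls catalanC + (2 - fls_X) / fls_X)
     * fps_to_fls (g_minus v oo (fps_X * catalanC)))
   \<and> (fps_to_fls (g_plus v oo (fps_X * catalanC)) =
     ((fls_X - 2) / fls_X
        + fls_X / (1 - fls_X) * fps_to_fls (motzkinM oo (fps_X / (1 - fps_X))))
     * fps_to_fls (g_minus v oo
         (- (fps_X / (1 - fps_X) * (motzkinM oo (fps_X / (1 - fps_X)))))))
   \<and> (fps_to_fls (g_plus v oo
       (- (fps_X / (1 - fps_X) * (motzkinM oo (fps_X / (1 - fps_X)))))) =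
     ((3 * fls_X - 4) * fps_to_fls catalanC
        + 2 * fls_X ^ 2 * fps_to_fls catalanC / (1 - fls_X)
            * fps_to_fls (motzkinM oo (fps_X / (1 - fps_X)))
        + (2 - fls_X) / fls_X)
     * fps_to_fls (g_minus v oo (fps_X * catalanC)))"
proof -
  define C where "C = catalanC"
  have cq: "fps_X * C ^ 2 - C + 1 = 0" using C_eq by (simp add: C_def)
  have C0': "C $ 0 = 1" using C0 by (simp add: C_def)
  have i1: "inverse (1 - fps_X * C) = C"
    by (rule fps_inverse_unique) (use cq in algebra)
  have i2: "inverse (1 - (1 - C)) = 1 - fps_X * C"
    by (rule fps_inverse_unique) (use cq in algebra)
  have Q: "(1 - C) ^ 2 * (1 - fps_X * C) = (fps_X * C) ^ 2 * C"
    using cq by algebra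
  have h3: "- (fps_X / (1 - fps_X) * (motzkinM oo (fps_X / (1 - fps_X)))) = 1 - C"
    using E_eq by (simp add: C_def)
  define P where "P = gf v oo ((fps_X * C) ^ 2 * C)"
  have a1: "g_plus v oo (fps_X * C) = (2 - fps_X * C) * C * P"
    using gp_comp[of "fps_X * C" v] by (simp add: i1 P_def)
  have a2: "g_minus v oo (fps_X * C) = fps_X * C * C * P"
    using gm_comp[of "fps_X * C" v] by (simp add: i1 P_def)
  have a3: "g_plus v oo (1 - C) = (2 - (1 - C)) * (1 - fps_X * C) * P"
    using gp_comp[of "1 - C" v] C0' by (simp only: i2 Q P_def) simp
  have a4: "g_minus v oo (1 - C) = (1 - C) * (1 - fps_X * C) * P"
    using gm_comp[of "1 - C" v] C0' by (simp only: i2 Q P_def) simp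
  define x :: "real fls" where "x = fls_X"
  define c where "c = fps_to_fls C"
  define p where "p = fps_to_fls P"
  define n where "n = fps_to_fls (motzkinM oo (fps_X / (1 - fps_X)))"
  define w where "w = inverse x"
  define u where "u = inverse (1 - x)"
  have xw: "x * w = 1" by (simp add: w_def x_def)
  have ux: "(1 - x) * u = 1"
  proof -
    have "1 - x \<noteq> 0"
    proof
      assume "1 - x = 0"
      hence "fls_nth (1 - x) 0 = 0" by simp
      thus False by (simp add: x_def)
    qed
    thus ?thesis by (simp add: u_def)
  qed
  have cq': "x * c ^ 2 - c + 1 = 0"
  proof -
    have "fps_to_fls (fps_X * C ^ 2 - C + 1) = 0" using cq by simp
    thus ?thesis by (simp add: x_def c_def fls_times_fps_to_fls fps_to_fls_power)
  qed
  have nq: "x * u * n = c - 1"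
  proof -
    have "fps_to_fls (fps_X * inverse (1 - fps_X) * (motzkinM oo (fps_X / (1 - fps_X)))) = fps_to_fls (C - 1)"
      using E_eq by (simp add: C_def dv1)
    moreover have "fps_to_fls (inverse (1 - fps_X) :: real fps) = u"
      using fls_inverse_fps_to_fls[of "1 - fps_X :: real fps"] by (simp add: u_def x_def)
    ultimately show ?thesis by (simp add: x_def c_def n_def fls_times_fps_to_fls)
  qed
  note alg = fls_alg[OF xw cq' nq ux, of p]
  show ?thesis
    unfolding C_def[symmetric] h3 a1 a2 a3 a4
    apply (simp only: fls_times_fps_to_fls fps_to_fls_power fps_to_fls_minus fps_to_fls_plus
        fps_X_to_fls fps_one_to_fls fps_to_fls_numeral flip: x_def c_def p_def n_def)
    apply (simp only: divide_inverse flip: w_def u_def)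
    using alg by (simp add: algebra_simps)
qed

end
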